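(* Let $n\ge1$ and let $(\rho,\alpha)$ satisfy either $\alpha\in(1,2)$ and $0\le\rho\le\frac{1-\theta(\alpha)}{1+\theta(\alpha)}$, or $\alpha\in[2,3]$ and $0\le\rho\le1$. Then $\mathbf{MaxStab}_\alpha(\tfrac12)$ is attained by dictator functions, i.e. for every $f:\{-1,1\}^n\to\{0,1\}$ with $\mathbb Ef(\mathbf X)=\tfrac12$, $\mathbb E[\Phi_\alpha(T_\rho f(\mathbf X))]\le\tfrac12\Phi_\alpha(\tfrac{1+\rho}{2})+\tfrac12\Phi_\alpha(\tfrac{1-\rho}{2})$.
   Context: $\mathbf X$ uniform on $\{-1,1\}^n$; $\mathbf Y$ obtained by independently flipping each coordinate of $\mathbf X$ with probability $(1-\rho)/2$; $T_\rho f(\mathbf x)=\mathbb E[f(\mathbf Y)\mid\mathbf X=\mathbf x]$. For $\alpha>1$, $\Phi_\alpha(t)=t\cdot\frac{t^{\alpha-1}-1}{\alpha-1}$ on $[0,1]$. $\mathbf{MaxStab}_\alpha(a)$ is the maximum of $\mathbb E[\Phi_\alpha(T_\rho f(\mathbf X))]$ over Boolean $f$ with $\mathbb Ef(\mathbf X)=a$. Dictator functions are $1\{x_k=1\}$, $1\{x_k=-1\}$. For $\alpha\in(1,2)$, $\theta(\alpha)$ is the unique solution $\theta\in(0,1)$ of $\theta^{2-\alpha}+\frac1\alpha(1-\theta)=1$. *)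

theory Defs
  imports Complex_Main "HOL-Library.FuncSet"
begin

definition cube :: "nat \<Rightarrow> (nat \<Rightarrow> real) set" where
  "cube n = PiE {..<n} (\<lambda>_. {-1, 1})"

definition cube_exp :: "nat \<Rightarrow> ((nat \<Rightarrow> real) \<Rightarrow> real) \<Rightarrow> real" where
  "cube_exp n g = (\<Sum>x\<in>cube n. g x) / 2 ^ n"

text \<open>Probability that Y = y given X = x, each coordinate flipped independently
  with probability (1 - rho)/2.\<close>
definition noise_kernel :: "nat \<Rightarrow> real \<Rightarrow> (nat \<Rightarrow> real) \<Rightarrow> (nat \<Rightarrow> real) \<Rightarrow> real" where
  "noise_kernel n \<rho> x y =
     (\<Prod>i<n. if y i = x i then (1 + \<rho>) / 2 else (1 - \<rho>) / 2)"

definition noise_op :: "nat \<Rightarrow> real \<Rightarrow> ((nat \<Rightarrow> real) \<Rightarrow> real) \<Rightarrow> (nat \<Rightarrow> real) \<Rightarrow> real" where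
  "noise_op n \<rho> f x = (\<Sum>y\<in>cube n. noise_kernel n \<rho> x y * f y)"

definition Phi :: "real \<Rightarrow> real \<Rightarrow> real" where
  "Phi \<alpha> t = t * ((t powr (\<alpha> - 1) - 1) / (\<alpha> - 1))"

definition theta :: "real \<Rightarrow> real" where
  "theta \<alpha> = (THE \<theta>. 0 < \<theta> \<and> \<theta> < 1 \<and> \<theta> powr (2 - \<alpha>) + (1 - \<theta>) / \<alpha> = 1)"

end

theory Submission
  imports Defs
begin

definition chi :: "nat set \<Rightarrow> (nat \<Rightarrow> real) \<Rightarrow> real" where
  "chi S x = (\<Prod>i\<in>S. x i)"

lemma cube_mem: "x \<in> cube n \<Longrightarrow> i < n \<Longrightarrow> x i = -1 \<or> x i = 1"
  unfolding cube_def by (auto simp: PiE_iff)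

lemma finite_cube: "finite (cube n)"
  unfolding cube_def by (rule finite_PiE) auto

lemma kernel_fourier:
  assumes x: "x \<in> cube n" and y: "y \<in> cube n"
  shows "noise_kernel n \<rho> x y =
     (\<Sum>S\<in>Pow {..<n}. \<rho> ^ card S * chi S x * chi S y) / 2 ^ n"
proof -
  have "noise_kernel n \<rho> x y = (\<Prod>i<n. (1 + \<rho> * x i * y i) / 2)"
    unfolding noise_kernel_def
  proof (rule prod.cong[OF refl])
    fix i assume "i \<in> {..<n}"
    then have "x i = -1 \<or> x i = 1" "y i = -1 \<or> y i = 1" using cube_mem x y by auto
    then show "(if y i = x i then (1 + \<rho>) / 2 else (1 - \<rho>) / 2) = (1 + \<rho> * x i * y i) / 2"
      by auto
  qed
  also have "\<dots> = (\<Prod>i<n. 1 + \<rho> * x i * y i) / 2 ^ n"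
    by (simp add: prod_dividef)
  also have "(\<Prod>i<n. 1 + \<rho> * x i * y i) = (\<Prod>i<n. \<rho> * x i * y i + 1)"
    by (simp add: add.commute)
  also have "\<dots> = (\<Sum>S\<in>Pow {..<n}. (\<Prod>i\<in>S. \<rho> * x i * y i) * (\<Prod>i\<in>{..<n}-S. 1))"
    by (rule prod_add) simp
  also have "\<dots> = (\<Sum>S\<in>Pow {..<n}. \<rho> ^ card S * chi S x * chi S y)"
    by (rule sum.cong[OF refl]) (simp add: chi_def prod.distrib)
  finally show ?thesis .
qed

definition fh :: "nat \<Rightarrow> ((nat \<Rightarrow> real) \<Rightarrow> real) \<Rightarrow> nat set \<Rightarrow> real" where
  "fh n h S = (\<Sum>y\<in>cube n. h y * chi S y) / 2 ^ n"

lemma dsum: "(\<Sum>x\<in>A. \<Sum>y\<in>B. (c::real) * (a x * b y)) = c * ((\<Sum>x\<in>A. a x) * (\<Sum>y\<in>B. b y))"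
proof -
  have "c * ((\<Sum>x\<in>A. a x) * (\<Sum>y\<in>B. b y)) = c * (\<Sum>x\<in>A. \<Sum>y\<in>B. a x * b y)"
    by (simp only: sum_product)
  also have "\<dots> = (\<Sum>x\<in>A. \<Sum>y\<in>B. c * (a x * b y))"
    by (simp only: sum_distrib_left)
  finally show ?thesis by simp
qed

lemma quad_fourier:
  "(\<Sum>x\<in>cube n. h x * noise_op n \<rho> h x) = 2 ^ n * (\<Sum>S\<in>Pow {..<n}. \<rho> ^ card S * (fh n h S)\<^sup>2)"
proof -
  have "(\<Sum>x\<in>cube n. h x * noise_op n \<rho> h x) =
     (\<Sum>x\<in>cube n. \<Sum>y\<in>cube n. \<Sum>S\<in>Pow {..<n}. (\<rho> ^ card S / 2 ^ n) * ((h x * chi S x) * (h y * chi S y)))"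
    unfolding noise_op_def
    by (intro sum.cong refl) (simp add: kernel_fourier sum_distrib_left sum_distrib_right sum_divide_distrib mult_ac)
  also have "\<dots> = (\<Sum>S\<in>Pow {..<n}. (\<rho> ^ card S / 2 ^ n) * ((\<Sum>x\<in>cube n. h x * chi S x) * (\<Sum>y\<in>cube n. h y * chi S y)))"
  proof -
    have "(\<Sum>x\<in>cube n. \<Sum>y\<in>cube n. \<Sum>S\<in>Pow {..<n}. (\<rho> ^ card S / 2 ^ n) * ((h x * chi S x) * (h y * chi S y)))
       = (\<Sum>x\<in>cube n. \<Sum>S\<in>Pow {..<n}. \<Sum>y\<in>cube n. (\<rho> ^ card S / 2 ^ n) * ((h x * chi S x) * (h y * chi S y)))"
      by (intro sum.cong refl) (rule sum.swap)
    also have "\<dots> = (\<Sum>S\<in>Pow {..<n}. \<Sum>x\<in>cube n. \<Sum>y\<in>cube n. (\<rho> ^ card S / 2 ^ n) * ((h x * chi S x) * (h y * chi S y)))"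
      by (rule sum.swap)
    also have "\<dots> = (\<Sum>S\<in>Pow {..<n}. (\<rho> ^ card S / 2 ^ n) * ((\<Sum>x\<in>cube n. h x * chi S x) * (\<Sum>y\<in>cube n. h y * chi S y)))"
      by (intro sum.cong refl) (rule dsum)
    finally show ?thesis .
  qed
  also have "\<dots> = (\<Sum>S\<in>Pow {..<n}. 2 ^ n * (\<rho> ^ card S * (fh n h S)\<^sup>2))"
    by (intro sum.cong refl) (simp add: fh_def power2_eq_square field_simps)
  also have "\<dots> = 2 ^ n * (\<Sum>S\<in>Pow {..<n}. \<rho> ^ card S * (fh n h S)\<^sup>2)"
    by (simp add: sum_distrib_left)
  finally show ?thesis .
qed

lemma sum_cube_prod:
  fixes g :: "nat \<Rightarrow> real \<Rightarrow> real"
  shows "(\<Sum>x\<in>cube n. \<Prod>i<n. g i (x i)) = (\<Prod>i<n. g i (-1) + g i 1)"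
proof -
  have "(\<Prod>i<n. \<Sum>v\<in>{-1,1::real}. g i v) = (\<Sum>x\<in>PiE {..<n} (\<lambda>_. {-1,1}). \<Prod>i<n. g i (x i))"
    by (rule prod_sum_PiE) auto
  then show ?thesis by (simp add: cube_def)
qed

lemma kernel_row:
  assumes y: "y \<in> cube n"
  shows "(\<Sum>x\<in>cube n. noise_kernel n \<rho> x y) = 1"
proof -
  have "(\<Sum>x\<in>cube n. noise_kernel n \<rho> x y) =
      (\<Sum>x\<in>cube n. \<Prod>i<n. (\<lambda>i v. if y i = v then (1 + \<rho>) / 2 else (1 - \<rho>) / 2) i (x i))"
    by (simp add: noise_kernel_def)
  also have "\<dots> = (\<Prod>i<n. (if y i = -1 then (1 + \<rho>) / 2 else (1 - \<rho>) / 2) + (if y i = 1 then (1 + \<rho>) / 2 else (1 - \<rho>) / 2))"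
    by (rule sum_cube_prod)
  also have "\<dots> = (\<Prod>i<n. 1)"
  proof (rule prod.cong[OF refl])
    fix i assume "i \<in> {..<n}"
    then have "y i = -1 \<or> y i = 1" using cube_mem y by auto
    then show "(if y i = -1 then (1 + \<rho>) / 2 else (1 - \<rho>) / 2) + (if y i = 1 then (1 + \<rho>) / 2 else (1 - \<rho>) / 2) = 1"
      by (auto simp: field_simps)
  qed
  finally show ?thesis by simp
qed

lemma kernel_sym: "noise_kernel n \<rho> x y = noise_kernel n \<rho> y x"
  unfolding noise_kernel_def by (intro prod.cong refl) auto

lemma kernel_col:
  assumes x: "x \<in> cube n"
  shows "(\<Sum>y\<in>cube n. noise_kernel n \<rho> x y) = 1"
  using kernel_row[OF x, of \<rho>] by (simp add: kernel_sym)

lemma kernel_nonneg: "0 \<le> \<rho> \<Longrightarrow> \<rho> \<le> 1 \<Longrightarrow> 0 \<le> noise_kernel n \<rho> x y"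
  unfolding noise_kernel_def by (intro prod_nonneg) auto

lemma kernel_sq:
  assumes y: "y \<in> cube n" and z: "z \<in> cube n"
  shows "(\<Sum>x\<in>cube n. noise_kernel n \<rho> x y * noise_kernel n \<rho> x z) = noise_kernel n (\<rho>\<^sup>2) y z"
proof -
  let ?k = "\<lambda>w v. if w = v then (1 + \<rho>) / 2 else (1 - \<rho>) / 2"
  have "(\<Sum>x\<in>cube n. noise_kernel n \<rho> x y * noise_kernel n \<rho> x z) =
      (\<Sum>x\<in>cube n. \<Prod>i<n. (\<lambda>i v. ?k (y i) v * ?k (z i) v) i (x i))"
    by (simp add: noise_kernel_def prod.distrib)
  also have "\<dots> = (\<Prod>i<n. ?k (y i) (-1) * ?k (z i) (-1) + ?k (y i) 1 * ?k (z i) 1)"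
    by (rule sum_cube_prod)
  also have "\<dots> = noise_kernel n (\<rho>\<^sup>2) y z"
    unfolding noise_kernel_def
  proof (rule prod.cong[OF refl])
    fix i assume "i \<in> {..<n}"
    then have "y i = -1 \<or> y i = 1" "z i = -1 \<or> z i = 1" using cube_mem y z by auto
    then show "?k (y i) (-1) * ?k (z i) (-1) + ?k (y i) 1 * ?k (z i) 1 =
        (if z i = y i then (1 + \<rho>\<^sup>2) / 2 else (1 - \<rho>\<^sup>2) / 2)"
      by (auto simp: field_simps power2_eq_square)
  qed
  finally show ?thesis .
qed

lemma kernel_one:
  assumes x: "x \<in> cube n" and y: "y \<in> cube n"
  shows "noise_kernel n 1 x y = (if x = y then 1 else 0)"
proof (cases "x = y")
  case True
  then show ?thesis by (simp add: noise_kernel_def)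
next
  case False
  have "\<exists>i<n. x i \<noteq> y i"
  proof (rule ccontr)
    assume "\<not> (\<exists>i<n. x i \<noteq> y i)"
    then have "x = y" using PiE_ext[of x "{..<n}" "\<lambda>_. {-1,1}" y] x y unfolding cube_def by auto
    then show False using False by simp
  qed
  then obtain i where i: "i < n" "x i \<noteq> y i" by blast
  then have "noise_kernel n 1 x y = 0"
    unfolding noise_kernel_def using i by (intro prod_zero bexI[of _ i]) auto
  then show ?thesis using False by simp
qed

lemma noise_one: "x \<in> cube n \<Longrightarrow> noise_op n 1 h x = h x"
proof -
  assume x: "x \<in> cube n"
  have "noise_op n 1 h x = (\<Sum>y\<in>cube n. (if x = y then h y else 0))"
    unfolding noise_op_def by (intro sum.cong refl) (simp add: kernel_one x)
  also have "\<dots> = h x" using x finite_cube by (simp add: sum.delta)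
  finally show ?thesis .
qed

lemma noise_sum: "(\<Sum>x\<in>cube n. noise_op n \<rho> h x) = (\<Sum>y\<in>cube n. h y)"
proof -
  have "(\<Sum>x\<in>cube n. noise_op n \<rho> h x) = (\<Sum>y\<in>cube n. \<Sum>x\<in>cube n. noise_kernel n \<rho> x y * h y)"
    unfolding noise_op_def by (rule sum.swap)
  also have "\<dots> = (\<Sum>y\<in>cube n. (\<Sum>x\<in>cube n. noise_kernel n \<rho> x y) * h y)"
    by (simp add: sum_distrib_right)
  also have "\<dots> = (\<Sum>y\<in>cube n. h y)"
    by (intro sum.cong refl) (simp add: kernel_row)
  finally show ?thesis .
qed

lemma noise_range:
  assumes "0 \<le> \<rho>" "\<rho> \<le> 1" "x \<in> cube n" "\<forall>y\<in>cube n. 0 \<le> h y \<and> h y \<le> 1"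
  shows "0 \<le> noise_op n \<rho> h x \<and> noise_op n \<rho> h x \<le> 1"
proof
  show "0 \<le> noise_op n \<rho> h x"
    unfolding noise_op_def using assms by (intro sum_nonneg mult_nonneg_nonneg kernel_nonneg) auto
  have "noise_op n \<rho> h x \<le> (\<Sum>y\<in>cube n. noise_kernel n \<rho> x y)"
    unfolding noise_op_def using assms
    by (intro sum_mono) (simp add: kernel_nonneg mult_left_le)
  then show "noise_op n \<rho> h x \<le> 1" using kernel_col[OF assms(3)] by simp
qed

lemma noise_sq: "(\<Sum>x\<in>cube n. (noise_op n \<rho> h x)\<^sup>2) = (\<Sum>y\<in>cube n. h y * noise_op n (\<rho>\<^sup>2) h y)"
proof -
  have "(\<Sum>x\<in>cube n. (noise_op n \<rho> h x)\<^sup>2) =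
     (\<Sum>x\<in>cube n. \<Sum>y\<in>cube n. \<Sum>z\<in>cube n. h y * h z * (noise_kernel n \<rho> x y * noise_kernel n \<rho> x z))"
    unfolding noise_op_def power2_eq_square
    by (intro sum.cong refl) (simp only: sum_product, intro sum.cong refl, simp add: mult_ac)
  also have "\<dots> = (\<Sum>y\<in>cube n. \<Sum>z\<in>cube n. \<Sum>x\<in>cube n. h y * h z * (noise_kernel n \<rho> x y * noise_kernel n \<rho> x z))"
  proof -
    have "\<And>x. (\<Sum>y\<in>cube n. \<Sum>z\<in>cube n. h y * h z * (noise_kernel n \<rho> x y * noise_kernel n \<rho> x z))
        = (\<Sum>y\<in>cube n. \<Sum>z\<in>cube n. h y * h z * (noise_kernel n \<rho> x y * noise_kernel n \<rho> x z))" by simp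
    have "(\<Sum>x\<in>cube n. \<Sum>y\<in>cube n. \<Sum>z\<in>cube n. h y * h z * (noise_kernel n \<rho> x y * noise_kernel n \<rho> x z))
       = (\<Sum>y\<in>cube n. \<Sum>x\<in>cube n. \<Sum>z\<in>cube n. h y * h z * (noise_kernel n \<rho> x y * noise_kernel n \<rho> x z))"
      by (rule sum.swap)
    also have "\<dots> = (\<Sum>y\<in>cube n. \<Sum>z\<in>cube n. \<Sum>x\<in>cube n. h y * h z * (noise_kernel n \<rho> x y * noise_kernel n \<rho> x z))"
      by (rule sum.cong[OF refl]) (rule sum.swap)
    finally show ?thesis .
  qed
  also have "\<dots> = (\<Sum>y\<in>cube n. \<Sum>z\<in>cube n. h y * h z * noise_kernel n (\<rho>\<^sup>2) y z)"
    by (intro sum.cong refl) (simp add: sum_distrib_left[symmetric] kernel_sq)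
  also have "\<dots> = (\<Sum>y\<in>cube n. h y * noise_op n (\<rho>\<^sup>2) h y)"
    unfolding noise_op_def by (intro sum.cong refl) (simp add: sum_distrib_left mult_ac)
  finally show ?thesis .
qed

lemma moments:
  fixes f :: "(nat \<Rightarrow> real) \<Rightarrow> real"
  assumes r0: "0 \<le> \<rho>" and r1: "\<rho> \<le> 1"
    and fB: "\<forall>x\<in>cube n. f x \<in> {0, 1}"
    and fE: "cube_exp n f = 1 / 2"
  shows "(\<Sum>x\<in>cube n. f x) = 2 ^ n / 2"
    and "(\<Sum>x\<in>cube n. noise_op n \<rho> f x) = 2 ^ n / 2"
    and "(\<Sum>x\<in>cube n. f x * noise_op n \<rho> f x) \<le> 2 ^ n * ((1 + \<rho>) / 4)"
    and "(\<Sum>x\<in>cube n. (noise_op n \<rho> f x)\<^sup>2) \<le>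
           \<rho> * (\<Sum>x\<in>cube n. f x * noise_op n \<rho> f x) + 2 ^ n * ((1 - \<rho>) / 4)"
proof -
  define a where "a S = (fh n f S)\<^sup>2" for S
  have sf: "(\<Sum>x\<in>cube n. f x) = 2 ^ n / 2"
    using fE unfolding cube_exp_def by (simp add: field_simps)
  then show "(\<Sum>x\<in>cube n. f x) = 2 ^ n / 2" .
  show "(\<Sum>x\<in>cube n. noise_op n \<rho> f x) = 2 ^ n / 2"
    using sf noise_sum by simp
  have a0: "a {} = 1/4"
  proof -
    have "fh n f {} = 1/2" unfolding fh_def chi_def using sf by simp
    then show ?thesis unfolding a_def by (simp only:) (simp add: power2_eq_square)
  qed
  have ff: "(\<Sum>x\<in>cube n. f x * f x) = 2 ^ n / 2"
  proof -
    have "(\<Sum>x\<in>cube n. f x * f x) = (\<Sum>x\<in>cube n. f x)"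
      using fB by (intro sum.cong refl) auto
    then show ?thesis using sf by simp
  qed
  have "(\<Sum>x\<in>cube n. f x * f x) = (\<Sum>x\<in>cube n. f x * noise_op n 1 f x)"
    by (intro sum.cong refl) (simp add: noise_one)
  also have "\<dots> = 2 ^ n * (\<Sum>S\<in>Pow {..<n}. a S)"
    unfolding quad_fourier a_def by simp
  finally have suma: "(\<Sum>S\<in>Pow {..<n}. a S) = 1/2" using ff by simp
  have anon: "\<And>S. 0 \<le> a S" unfolding a_def by simp
  have E1: "(\<Sum>x\<in>cube n. f x * noise_op n \<rho> f x) = 2 ^ n * (\<Sum>S\<in>Pow {..<n}. \<rho> ^ card S * a S)"
    unfolding quad_fourier a_def by simp
  have E3: "(\<Sum>x\<in>cube n. (noise_op n \<rho> f x)\<^sup>2) = 2 ^ n * (\<Sum>S\<in>Pow {..<n}. (\<rho>\<^sup>2) ^ card S * a S)"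
    unfolding noise_sq quad_fourier a_def by simp
  have card1: "S \<in> Pow {..<n} \<Longrightarrow> S \<noteq> {} \<Longrightarrow> 1 \<le> card S" for S
    using finite_subset[of S "{..<n}"] by (auto simp: Suc_le_eq card_gt_0_iff)
  have delta: "(\<Sum>S\<in>Pow {..<n}. if S = {} then (1 - \<rho>) * a S else 0) = (1 - \<rho>) / 4"
    using a0 by (simp add: sum.delta')
  have "(\<Sum>S\<in>Pow {..<n}. \<rho> ^ card S * a S) \<le>
      (\<Sum>S\<in>Pow {..<n}. \<rho> * a S + (if S = {} then (1 - \<rho>) * a S else 0))"
  proof (rule sum_mono)
    fix S assume S: "S \<in> Pow {..<n}"
    show "\<rho> ^ card S * a S \<le> \<rho> * a S + (if S = {} then (1 - \<rho>) * a S else 0)"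
    proof (cases "S = {}")
      case True then show ?thesis by (simp add: algebra_simps)
    next
      case False
      have "\<rho> ^ card S \<le> \<rho> ^ 1" using card1[OF S False] r0 r1 by (intro power_decreasing) auto
      then show ?thesis using False anon[of S] by (simp add: mult_right_mono)
    qed
  qed
  also have "\<dots> = \<rho> * (1/2) + (1 - \<rho>) / 4"
    by (simp add: sum.distrib sum_distrib_left[symmetric] suma delta)
  finally have Y: "(\<Sum>S\<in>Pow {..<n}. \<rho> ^ card S * a S) \<le> (1 + \<rho>) / 4" by (simp add: field_simps)
  then show "(\<Sum>x\<in>cube n. f x * noise_op n \<rho> f x) \<le> 2 ^ n * ((1 + \<rho>) / 4)"
    unfolding E1 by simp
  have "(\<Sum>S\<in>Pow {..<n}. (\<rho>\<^sup>2) ^ card S * a S) \<le>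
      (\<Sum>S\<in>Pow {..<n}. \<rho> * (\<rho> ^ card S * a S) + (if S = {} then (1 - \<rho>) * a S else 0))"
  proof (rule sum_mono)
    fix S assume S: "S \<in> Pow {..<n}"
    show "(\<rho>\<^sup>2) ^ card S * a S \<le> \<rho> * (\<rho> ^ card S * a S) + (if S = {} then (1 - \<rho>) * a S else 0)"
    proof (cases "S = {}")
      case True then show ?thesis by (simp add: algebra_simps)
    next
      case False
      have "\<rho> ^ (2 * card S) \<le> \<rho> ^ (Suc (card S))" using card1[OF S False] r0 r1 by (intro power_decreasing) auto
      then have "(\<rho>\<^sup>2) ^ card S \<le> \<rho> * \<rho> ^ card S" by (simp add: power_mult)
      then show ?thesis using False anon[of S] by (simp add: mult_right_mono mult.assoc[symmetric])
    qed
  qed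
  also have "\<dots> = \<rho> * (\<Sum>S\<in>Pow {..<n}. \<rho> ^ card S * a S) + (1 - \<rho>) / 4"
    by (simp add: sum.distrib sum_distrib_left[symmetric] delta)
  finally have Z: "(\<Sum>S\<in>Pow {..<n}. (\<rho>\<^sup>2) ^ card S * a S) \<le> \<rho> * (\<Sum>S\<in>Pow {..<n}. \<rho> ^ card S * a S) + (1 - \<rho>) / 4" .
  have "(2::real) ^ n * (\<Sum>S\<in>Pow {..<n}. (\<rho>\<^sup>2) ^ card S * a S) \<le> 2 ^ n * (\<rho> * (\<Sum>S\<in>Pow {..<n}. \<rho> ^ card S * a S) + (1 - \<rho>) / 4)"
    using Z by (intro mult_left_mono) auto
  then show "(\<Sum>x\<in>cube n. (noise_op n \<rho> f x)\<^sup>2) \<le>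
           \<rho> * (\<Sum>x\<in>cube n. f x * noise_op n \<rho> f x) + 2 ^ n * ((1 - \<rho>) / 4)"
    unfolding E1 E3 by (simp add: algebra_simps)
qed

lemma exp_gt_lin: "x \<noteq> 0 \<Longrightarrow> 1 + x < exp (x::real)"
proof (cases "1 + x / 2 \<ge> 0")
  case True
  assume x: "x \<noteq> 0"
  have "(1 + x/2)^2 \<le> (exp (x/2))^2"
    using True exp_ge_add_one_self[of "x/2"] by (intro power_mono) auto
  also have "(exp (x/2))^2 = exp x" by (simp add: power2_eq_square exp_add[symmetric])
  finally have "(1 + x/2)^2 \<le> exp x" .
  moreover have "1 + x < (1 + x/2)^2"
  proof -
    have "0 < x^2" using x by simp
    moreover have "(1 + x/2)^2 = 1 + x + x^2/4" by (simp add: power2_eq_square field_simps)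
    ultimately show ?thesis by linarith
  qed
  ultimately show ?thesis by linarith
next
  case False
  then have "1 + x < 0" by linarith
  then show ?thesis using exp_gt_zero[of x] by linarith
qed

lemma exp_tangent: "exp m * (1 + (A - m)) \<le> exp (A::real)"
proof -
  have "exp A = exp m * exp (A - m)" by (simp add: exp_add[symmetric])
  then show ?thesis using exp_ge_add_one_self[of "A - m"] by (simp add: mult_left_mono)
qed

lemma exp_tangent_strict: "A \<noteq> m \<Longrightarrow> exp m * (1 + (A - m)) < exp (A::real)"
proof -
  assume "A \<noteq> m"
  have "exp A = exp m * exp (A - m)" by (simp add: exp_add[symmetric])
  then show ?thesis using exp_gt_lin[of "A - m"] \<open>A \<noteq> m\<close> by simp
qed

lemma amgm_le:
  fixes l A B :: real
  assumes "0 \<le> l" "l \<le> 1"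
  shows "exp (l * A + (1 - l) * B) \<le> l * exp A + (1 - l) * exp B"
proof -
  define m where "m = l * A + (1 - l) * B"
  have "l * (exp m * (1 + (A - m))) \<le> l * exp A"
    using assms exp_tangent by (intro mult_left_mono) auto
  moreover have "(1 - l) * (exp m * (1 + (B - m))) \<le> (1 - l) * exp B"
    using assms exp_tangent by (intro mult_left_mono) auto
  moreover have "l * (exp m * (1 + (A - m))) + (1 - l) * (exp m * (1 + (B - m))) = exp m"
    unfolding m_def by (simp add: algebra_simps)
  ultimately show ?thesis unfolding m_def by linarith
qed

lemma amgm_less:
  fixes l A B :: real
  assumes "0 < l" "l < 1" "A \<noteq> B"
  shows "exp (l * A + (1 - l) * B) < l * exp A + (1 - l) * exp B"
proof -
  define m where "m = l * A + (1 - l) * B"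
  have "A - m = (1 - l) * (A - B)" unfolding m_def by (simp add: algebra_simps)
  then have "A \<noteq> m" using assms by auto
  have "l * (exp m * (1 + (A - m))) < l * exp A"
    using assms exp_tangent_strict[OF \<open>A \<noteq> m\<close>] by (intro mult_strict_left_mono) auto
  moreover have "(1 - l) * (exp m * (1 + (B - m))) \<le> (1 - l) * exp B"
    using assms exp_tangent by (intro mult_left_mono) auto
  moreover have "l * (exp m * (1 + (A - m))) + (1 - l) * (exp m * (1 + (B - m))) = exp m"
    unfolding m_def by (simp add: algebra_simps)
  ultimately show ?thesis unfolding m_def by linarith
qed

lemma powr_exp: fixes t a :: real assumes "0 < t" shows "t powr a = exp (a * ln t)"
  using assms by (simp add: powr_def)

lemma A2:
  fixes \<alpha> s t :: real
  assumes "1 < \<alpha>" "\<alpha> < 2" "0 \<le> s" "0 < t"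
  shows "s powr \<alpha> \<le> (\<alpha> - 1) * t powr (\<alpha> - 2) * s\<^sup>2 + (2 - \<alpha>) * t powr (\<alpha> - 1) * s"
proof (cases "s = 0")
  case True then show ?thesis by simp
next
  case False
  then have s: "0 < s" using assms by simp
  define A where "A = (\<alpha> - 2) * ln t + 2 * ln s"
  define B where "B = (\<alpha> - 1) * ln t + ln s"
  have L: "exp ((\<alpha> - 1) * A + (1 - (\<alpha> - 1)) * B) \<le> (\<alpha> - 1) * exp A + (1 - (\<alpha> - 1)) * exp B"
    using assms by (intro amgm_le) auto
  have eq: "(\<alpha> - 1) * A + (1 - (\<alpha> - 1)) * B = \<alpha> * ln s"
    unfolding A_def B_def by (simp add: algebra_simps)
  have e2: "exp (2 * ln s) = s\<^sup>2"
  proof -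
    have "exp (2 * ln s) = exp (ln s) * exp (ln s)" by (simp only: mult_2 exp_add)
    then show ?thesis using s by (simp add: power2_eq_square)
  qed
  have eA: "exp A = t powr (\<alpha> - 2) * s\<^sup>2"
  proof -
    have "exp A = exp ((\<alpha> - 2) * ln t) * exp (2 * ln s)" by (simp only: A_def exp_add)
    then show ?thesis using e2 powr_exp[OF \<open>0 < t\<close>, of "\<alpha> - 2"] by simp
  qed
  have eB: "exp B = t powr (\<alpha> - 1) * s"
  proof -
    have "exp B = exp ((\<alpha> - 1) * ln t) * exp (ln s)" by (simp only: B_def exp_add)
    then show ?thesis using s powr_exp[OF \<open>0 < t\<close>, of "\<alpha> - 1"] by simp
  qed
  have "s powr \<alpha> = exp (\<alpha> * ln s)" by (rule powr_exp[OF s])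
  also have "\<dots> = exp ((\<alpha> - 1) * A + (1 - (\<alpha> - 1)) * B)" by (simp only: eq)
  also have "\<dots> \<le> (\<alpha> - 1) * exp A + (1 - (\<alpha> - 1)) * exp B" by (rule L)
  also have "\<dots> = (\<alpha> - 1) * t powr (\<alpha> - 2) * s\<^sup>2 + (2 - \<alpha>) * t powr (\<alpha> - 1) * s"
  proof -
    have "1 - (\<alpha> - 1) = 2 - \<alpha>" by simp
    then show ?thesis by (simp only: eA eB mult.assoc)
  qed
  finally show ?thesis .
qed

lemma concave_tangent:
  fixes g x r :: real
  assumes "0 < g" "g < 1" "0 < x" "0 < r"
  shows "x powr g * r \<le> r powr g * (g * x + (1 - g) * r)"
    and "x \<noteq> r \<Longrightarrow> x powr g * r < r powr g * (g * x + (1 - g) * r)"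
proof -
  have e: "exp (g * ln x + (1 - g) * ln r) = x powr g * r powr (1 - g)"
    using assms by (simp add: exp_add powr_exp)
  have rr: "r powr g * r powr (1 - g) = r" using assms by (simp add: powr_add[symmetric])
  have "exp (g * ln x + (1 - g) * ln r) \<le> g * exp (ln x) + (1 - g) * exp (ln r)"
    using assms by (intro amgm_le) auto
  then have "x powr g * r powr (1 - g) \<le> g * x + (1 - g) * r" using e assms by simp
  then have "r powr g * (x powr g * r powr (1 - g)) \<le> r powr g * (g * x + (1 - g) * r)"
    by (intro mult_left_mono) auto
  moreover have rr2: "r powr g * (x powr g * r powr (1 - g)) = x powr g * r"
    using rr by (metis mult.left_commute)
  ultimately show "x powr g * r \<le> r powr g * (g * x + (1 - g) * r)"
    by simp
  assume "x \<noteq> r"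
  then have "ln x \<noteq> ln r" using assms by simp
  have "exp (g * ln x + (1 - g) * ln r) < g * exp (ln x) + (1 - g) * exp (ln r)"
    using assms \<open>ln x \<noteq> ln r\<close> by (intro amgm_less) auto
  then have "x powr g * r powr (1 - g) < g * x + (1 - g) * r" using e assms by simp
  then have "r powr g * (x powr g * r powr (1 - g)) < r powr g * (g * x + (1 - g) * r)"
    using assms by (intro mult_strict_left_mono) auto
  then show "x powr g * r < r powr g * (g * x + (1 - g) * r)"
    using rr2 by simp
qed

lemma bern:
  fixes b u v :: real
  assumes "1 \<le> b" "0 < u" "0 < v"
  shows "b * u * v powr (b - 1) \<le> u powr b + (b - 1) * v powr b"
proof -
  have "exp ((1/b) * (b * ln u) + (1 - 1/b) * (b * ln v)) \<le> (1/b) * exp (b * ln u) + (1 - 1/b) * exp (b * ln v)"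
    using assms by (intro amgm_le) auto
  moreover have "(1/b) * (b * ln u) + (1 - 1/b) * (b * ln v) = ln u + (b - 1) * ln v"
    using assms by (simp add: field_simps)
  moreover have "exp (ln u + (b - 1) * ln v) = u * v powr (b - 1)"
    using assms by (simp add: exp_add powr_exp)
  moreover have "exp (b * ln u) = u powr b" "exp (b * ln v) = v powr b"
    using assms by (simp_all add: powr_exp)
  ultimately have "u * v powr (b - 1) \<le> (1/b) * u powr b + (1 - 1/b) * v powr b"
    by simp
  then have "b * (u * v powr (b - 1)) \<le> b * ((1/b) * u powr b + (1 - 1/b) * v powr b)"
    using assms by (intro mult_left_mono) auto
  moreover have "b * ((1/b) * u powr b + (1 - 1/b) * v powr b) = u powr b + (b - 1) * v powr b"
    using assms by (simp add: field_simps)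
  ultimately show ?thesis by (simp add: mult.assoc)
qed

lemma lip:
  fixes b u v :: real
  assumes "1 \<le> b" "0 \<le> u" "u \<le> v" "v \<le> 1"
  shows "v powr b - u powr b \<le> b * (v - u)"
proof (cases "u = 0")
  case True
  have "v powr b \<le> v powr 1" using assms by (intro powr_mono') auto
  also have "\<dots> \<le> v" using assms by (cases "v = 0") auto
  also have "\<dots> \<le> b * v" using assms by (simp add: mult_le_cancel_right1)
  finally show ?thesis using True assms by simp
next
  case False
  then have u: "0 < u" and v: "0 < v" using assms by auto
  have B: "b * u * v powr (b - 1) \<le> u powr b + (b - 1) * v powr b" by (rule bern) (use assms u v in auto)
  have vv: "v powr b = v * v powr (b - 1)"
  proof -
    have "v powr b = v powr (1 + (b - 1))" by simp
    also have "\<dots> = v powr 1 * v powr (b - 1)" by (rule powr_add)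
    finally show ?thesis using v by simp
  qed
  have le1: "v powr (b - 1) \<le> 1" using assms by (intro powr_le1) auto
  have "v powr b - u powr b \<le> b * v powr (b - 1) * (v - u)"
    using B vv by (simp add: algebra_simps)
  also have "\<dots> \<le> b * 1 * (v - u)"
    using le1 assms by (intro mult_right_mono mult_left_mono) auto
  finally show ?thesis by simp
qed

definition HH :: "real \<Rightarrow> real \<Rightarrow> real" where
  "HH \<alpha> r = \<alpha> * r powr (2 - \<alpha>) - r - (\<alpha> - 1)"

lemma HH_strict:
  fixes \<alpha> a r :: real
  assumes "1 < \<alpha>" "\<alpha> < 2" "0 < a" "a < r" "r < 1"
  shows "(1 - r) * HH \<alpha> a < (1 - a) * HH \<alpha> r"
proof -
  define g where "g = 2 - \<alpha>"
  have g: "0 < g" "g < 1" using assms unfolding g_def by auto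
  have r: "0 < r" using assms by simp
  define R where "R = r powr g"
  define Ra where "Ra = a powr g"
  let ?R = R
  have t1: "a powr g * r < ?R * (g * a + (1 - g) * r)"
    using concave_tangent(2)[OF g \<open>0 < a\<close> r] assms unfolding R_def by simp
  have t2: "1 powr g * r < ?R * (g * 1 + (1 - g) * r)"
    using concave_tangent(2)[OF g _ r, of 1] assms unfolding R_def by simp
  have s1: "(1 - r) * (a powr g * r) < (1 - r) * (?R * (g * a + (1 - g) * r))"
    using t1 assms by (intro mult_strict_left_mono) auto
  have s2: "(r - a) * r < (r - a) * (?R * (g + (1 - g) * r))"
    using t2 assms by (intro mult_strict_left_mono) auto
  have id: "(1 - r) * (?R * (g * a + (1 - g) * r)) + (r - a) * (?R * (g + (1 - g) * r)) = r * ((1 - a) * ?R)"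
    by (simp add: algebra_simps)
  have "r * ((1 - r) * Ra + (r - a)) < r * ((1 - a) * ?R)"
    using s1 s2 id unfolding Ra_def by (simp add: algebra_simps)
  then have K: "(1 - r) * Ra + (r - a) < (1 - a) * ?R"
    using r by simp
  have Hr: "HH \<alpha> r = \<alpha> * R - r - (\<alpha> - 1)" unfolding HH_def R_def g_def by simp
  have Ha: "HH \<alpha> a = \<alpha> * Ra - a - (\<alpha> - 1)" unfolding HH_def Ra_def g_def by simp
  have "(1 - a) * HH \<alpha> r - (1 - r) * HH \<alpha> a = \<alpha> * ((1 - a) * ?R - ((1 - r) * Ra + (r - a)))"
    unfolding Hr Ha by (simp add: algebra_simps)
  moreover have "0 < \<alpha> * ((1 - a) * ?R - ((1 - r) * Ra + (r - a)))"
    using K assms by simp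
  ultimately show ?thesis by linarith
qed

lemma HH_one: "HH \<alpha> 1 = 0"
  unfolding HH_def by simp

lemma theta_eq:
  fixes \<alpha> \<theta> :: real
  assumes "1 < \<alpha>"
  shows "(\<theta> powr (2 - \<alpha>) + (1 - \<theta>) / \<alpha> = 1) \<longleftrightarrow> HH \<alpha> \<theta> = 0"
  using assms unfolding HH_def by (auto simp: field_simps)

lemma theta_exists:
  fixes \<alpha> :: real
  assumes "1 < \<alpha>" "\<alpha> < 2"
  shows "\<exists>\<theta>. 0 < \<theta> \<and> \<theta> < 1 \<and> \<theta> powr (2 - \<alpha>) + (1 - \<theta>) / \<alpha> = 1"
proof -
  define g where "g = 2 - \<alpha>"
  have g: "0 < g" "g < 1" using assms unfolding g_def by auto
  define r1 where "r1 = (3 - \<alpha>) / 2"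
  have r1: "0 < r1" "r1 < 1" using assms unfolding r1_def by auto
  define D where "D = g + (1 - g) * r1"
  have D: "0 < D" unfolding D_def using g r1 by (simp add: add_pos_nonneg)
  have "1 powr g * r1 \<le> r1 powr g * (g * 1 + (1 - g) * r1)"
    using concave_tangent(1)[OF g _ r1(1), of 1] by simp
  then have low: "r1 \<le> r1 powr g * D" unfolding D_def by simp
  have poly: "\<alpha> * r1 - (r1 + \<alpha> - 1) * D = (\<alpha> - 1) ^ 3 / 4"
    unfolding r1_def D_def g_def by (simp add: field_simps power3_eq_cube)
  have "0 < (\<alpha> - 1) ^ 3" using assms by simp
  then have "(r1 + \<alpha> - 1) * D \<le> \<alpha> * r1"
    using poly by linarith
  also have "\<dots> \<le> \<alpha> * (r1 powr g * D)"
    using low assms by (intro mult_left_mono) auto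
  finally have "(r1 + \<alpha> - 1) * D \<le> (\<alpha> * r1 powr g) * D" by (simp add: mult_ac)
  then have H1: "r1 + \<alpha> - 1 \<le> \<alpha> * r1 powr g" using D by simp
  define G where "G x = x powr g + (1 - x) / \<alpha>" for x
  have G0: "G 0 \<le> 1" unfolding G_def using assms by simp
  have G1: "1 \<le> G r1" unfolding G_def using H1 assms by (simp add: field_simps)
  have cont: "continuous_on {0..r1} G"
  proof -
    have c1: "continuous_on {0..r1} (\<lambda>x. x powr g)"
      by (rule continuous_on_powr'[OF continuous_on_id continuous_on_const]) (use g in auto)
    have c2: "continuous_on {0..r1} (\<lambda>x. (1 - x) / \<alpha>)"
      using assms by (intro continuous_intros) auto
    show ?thesis unfolding G_def by (rule continuous_on_add[OF c1 c2])
  qed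
  obtain x where x: "0 \<le> x" "x \<le> r1" "G x = 1"
    using IVT'[of G 0 1 r1, OF G0 G1 _ cont] r1 by auto
  have "x \<noteq> 0" using x(3) assms unfolding G_def by auto
  then show ?thesis using x r1 unfolding G_def g_def by (intro exI[of _ x]) auto
qed

lemma theta_props:
  fixes \<alpha> :: real
  assumes "1 < \<alpha>" "\<alpha> < 2"
  shows "0 < theta \<alpha>" "theta \<alpha> < 1" "HH \<alpha> (theta \<alpha>) = 0"
proof -
  let ?P = "\<lambda>\<theta>. 0 < \<theta> \<and> \<theta> < 1 \<and> \<theta> powr (2 - \<alpha>) + (1 - \<theta>) / \<alpha> = 1"
  obtain x where x: "?P x" using theta_exists[OF assms] by blast
  have uniq: "y = x" if y: "?P y" for y
  proof (rule ccontr)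
    assume "y \<noteq> x"
    have Hx: "HH \<alpha> x = 0" using x theta_eq[OF assms(1), of x] by blast
    have Hy: "HH \<alpha> y = 0" using y theta_eq[OF assms(1), of y] by blast
    show False
    proof (cases "y < x")
      case True
      then show False using HH_strict[OF assms, of y x] x y Hx Hy by simp
    next
      case False
      then have "x < y" using \<open>y \<noteq> x\<close> by simp
      then show False using HH_strict[OF assms, of x y] x y Hx Hy by simp
    qed
  qed
  have "?P (theta \<alpha>)"
    unfolding theta_def by (rule theI[of ?P x]) (use x uniq in blast)+
  then show "0 < theta \<alpha>" "theta \<alpha> < 1" "HH \<alpha> (theta \<alpha>) = 0"
    using theta_eq[OF assms(1), of "theta \<alpha>"] by blast+
qed

lemma HH_nonneg:
  fixes \<alpha> r :: real
  assumes "1 < \<alpha>" "\<alpha> < 2" "theta \<alpha> \<le> r" "r \<le> 1"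
  shows "0 \<le> HH \<alpha> r"
proof -
  note th = theta_props[OF assms(1,2)]
  consider "r = theta \<alpha>" | "r = 1" | "theta \<alpha> < r \<and> r < 1" using assms by linarith
  then show ?thesis
  proof cases
    case 1 then show ?thesis using th by simp
  next
    case 2 then show ?thesis by (simp add: HH_one)
  next
    case 3
    have "(1 - r) * HH \<alpha> (theta \<alpha>) < (1 - theta \<alpha>) * HH \<alpha> r"
      using HH_strict[OF assms(1,2) th(1)] 3 by auto
    then have "0 < (1 - theta \<alpha>) * HH \<alpha> r" using th by simp
    then show ?thesis using th by (simp add: zero_less_mult_iff)
  qed
qed

lemma powr_shift:
  fixes t a b :: real
  assumes "0 < t"
  shows "t powr (a + b) = t powr a * t powr b"
  by (rule powr_add)

lemma F12:
  fixes \<alpha> s t q :: real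
  assumes "1 < \<alpha>" "\<alpha> < 2" "0 \<le> s" "0 < q" "q \<le> t"
  shows "s powr \<alpha> \<le> t powr \<alpha> + \<alpha> * t powr (\<alpha> - 1) * (s - t) + ((\<alpha> - 1) * q powr (\<alpha> - 2)) * (s - t)\<^sup>2"
proof -
  have t: "0 < t" using assms by simp
  define T2 where "T2 = t powr (\<alpha> - 2)"
  define Q2 where "Q2 = q powr (\<alpha> - 2)"
  have e1: "t powr (\<alpha> - 1) = t * T2"
  proof -
    have "t powr (\<alpha> - 1) = t powr (1 + (\<alpha> - 2))" by simp
    also have "\<dots> = t powr 1 * t powr (\<alpha> - 2)" by (rule powr_add)
    finally show ?thesis using t unfolding T2_def by simp
  qed
  have e2: "t powr \<alpha> = t\<^sup>2 * T2"
  proof -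
    have "t powr \<alpha> = t powr (2 + (\<alpha> - 2))" by simp
    also have "\<dots> = t powr 2 * t powr (\<alpha> - 2)" by (rule powr_add)
    finally show ?thesis using t unfolding T2_def by (simp add: powr_numeral)
  qed
  have TQ: "T2 \<le> Q2" unfolding T2_def Q2_def using assms by (intro powr_mono2') auto
  have "s powr \<alpha> \<le> (\<alpha> - 1) * T2 * s\<^sup>2 + (2 - \<alpha>) * (t * T2) * s"
    using A2[OF assms(1,2,3) t] e1 unfolding T2_def by simp
  also have "\<dots> = t\<^sup>2 * T2 + \<alpha> * (t * T2) * (s - t) + ((\<alpha> - 1) * T2) * (s - t)\<^sup>2"
    by (simp add: algebra_simps power2_eq_square)
  also have "\<dots> \<le> t\<^sup>2 * T2 + \<alpha> * (t * T2) * (s - t) + ((\<alpha> - 1) * Q2) * (s - t)\<^sup>2"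
    using TQ assms by (intro add_left_mono mult_right_mono mult_left_mono) auto
  finally show ?thesis unfolding e1 e2 Q2_def .
qed

lemma Cond12:
  fixes \<alpha> p q :: real
  assumes "1 < \<alpha>" "\<alpha> < 2" "0 < q" "q \<le> p"
    and H: "0 \<le> \<alpha> * (q / p) powr (2 - \<alpha>) - q / p - (\<alpha> - 1)"
  shows "(\<alpha> - 1) * q powr (\<alpha> - 2) * (p - q) \<le> \<alpha> * (p powr (\<alpha> - 1) - q powr (\<alpha> - 1))"
proof -
  have p: "0 < p" using assms by simp
  define A where "A = p powr (\<alpha> - 2)"
  define B where "B = q powr (\<alpha> - 2)"
  have A: "0 < A" and B: "0 < B" unfolding A_def B_def using p assms by auto
  have eA: "p powr (\<alpha> - 1) = p * A"
  proof -
    have "p powr (\<alpha> - 1) = p powr (1 + (\<alpha> - 2))" by simp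
    also have "\<dots> = p powr 1 * p powr (\<alpha> - 2)" by (rule powr_add)
    finally show ?thesis using p unfolding A_def by simp
  qed
  have eB: "q powr (\<alpha> - 1) = q * B"
  proof -
    have "q powr (\<alpha> - 1) = q powr (1 + (\<alpha> - 2))" by simp
    also have "\<dots> = q powr 1 * q powr (\<alpha> - 2)" by (rule powr_add)
    finally show ?thesis using assms unfolding B_def by simp
  qed
  have eR: "(q / p) powr (2 - \<alpha>) = A / B"
  proof -
    have "(q / p) powr (2 - \<alpha>) = q powr (2 - \<alpha>) / p powr (2 - \<alpha>)"
      using p assms by (simp add: powr_divide)
    also have "q powr (2 - \<alpha>) = inverse B"
      unfolding B_def using powr_minus[of q "\<alpha> - 2"] by simp
    also have "p powr (2 - \<alpha>) = inverse A"
      unfolding A_def using powr_minus[of p "\<alpha> - 2"] by simp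
    finally show ?thesis using A B by (simp add: field_simps)
  qed
  have "0 \<le> p * B * (\<alpha> * (A / B) - q / p - (\<alpha> - 1))"
    using H eR p B by simp
  also have "p * B * (\<alpha> * (A / B) - q / p - (\<alpha> - 1)) = \<alpha> * p * A - q * B - (\<alpha> - 1) * p * B"
    using p B by (simp add: field_simps)
  finally have K: "0 \<le> \<alpha> * p * A - q * B - (\<alpha> - 1) * p * B" .
  have "(\<alpha> - 1) * B * (p - q) \<le> \<alpha> * (p * A - q * B)"
    using K by (simp add: algebra_simps)
  then show ?thesis unfolding eA eB B_def by (simp add: mult_ac)
qed

lemma cont_powr_id:
  fixes a :: real
  assumes "0 < a" "\<And>x. x \<in> S \<Longrightarrow> 0 \<le> x"
  shows "continuous_on S (\<lambda>x. x powr a)"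
  by (rule continuous_on_powr'[OF continuous_on_id continuous_on_const]) (use assms in auto)

lemma F23:
  fixes \<alpha> s t :: real
  assumes "2 \<le> \<alpha>" "\<alpha> \<le> 3" "0 \<le> t" "t \<le> 1" "0 \<le> s" "s \<le> 1"
  shows "s powr \<alpha> \<le> t powr \<alpha> + \<alpha> * t powr (\<alpha> - 1) * (s - t) + (\<alpha> * (\<alpha> - 1) / 2) * (s - t)\<^sup>2"
proof -
  define D where "D x = t powr \<alpha> + \<alpha> * t powr (\<alpha> - 1) * (x - t) + (\<alpha> * (\<alpha> - 1) / 2) * (x - t)\<^sup>2 - x powr \<alpha>" for x
  have cont: "continuous_on S D" if "\<And>x. x \<in> S \<Longrightarrow> 0 \<le> x" for S
  proof -
    have "continuous_on S (\<lambda>x. x powr \<alpha>)" using assms that by (intro cont_powr_id) auto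
    moreover have "continuous_on S (\<lambda>x. t powr \<alpha> + \<alpha> * t powr (\<alpha> - 1) * (x - t) + (\<alpha> * (\<alpha> - 1) / 2) * (x - t)\<^sup>2)"
      by (intro continuous_intros)
    ultimately show ?thesis unfolding D_def by (intro continuous_on_diff)
  qed
  have deriv: "(D has_real_derivative (\<alpha> * t powr (\<alpha> - 1) + \<alpha> * (\<alpha> - 1) * (x - t) - \<alpha> * x powr (\<alpha> - 1))) (at x)"
    if x: "0 < x" for x
  proof -
    have d1: "((\<lambda>x. x powr \<alpha>) has_real_derivative \<alpha> * x powr (\<alpha> - 1)) (at x)"
      by (rule has_real_derivative_powr[OF x])
    have d2: "((\<lambda>x. (x - t)\<^sup>2) has_real_derivative 2 * (x - t)) (at x)"
      by (auto intro!: derivative_eq_intros)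
    have "(D has_real_derivative (0 + \<alpha> * t powr (\<alpha> - 1) * 1 + (\<alpha> * (\<alpha> - 1) / 2) * (2 * (x - t)) - \<alpha> * x powr (\<alpha> - 1))) (at x)"
      unfolding D_def
      by (intro DERIV_diff DERIV_add DERIV_cmult d1 d2 DERIV_const) (auto intro!: derivative_eq_intros)
    then show ?thesis by (rule DERIV_cong) (simp add: field_simps)
  qed
  have Dt: "D t = 0" unfolding D_def by simp
  have "0 \<le> D s"
  proof (cases "t \<le> s")
    case True
    have "D t \<le> D s"
    proof (rule DERIV_nonneg_imp_increasing_open[OF True])
      fix \<xi> assume \<xi>: "t < \<xi>" "\<xi> < s"
      then have \<xi>0: "0 < \<xi>" using assms by simp
      have "\<xi> powr (\<alpha> - 1) - t powr (\<alpha> - 1) \<le> (\<alpha> - 1) * (\<xi> - t)"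
        using \<xi> assms by (intro lip) auto
      then have "0 \<le> \<alpha> * ((\<alpha> - 1) * (\<xi> - t) - (\<xi> powr (\<alpha> - 1) - t powr (\<alpha> - 1)))"
        using assms by simp
      then have "0 \<le> \<alpha> * t powr (\<alpha> - 1) + \<alpha> * (\<alpha> - 1) * (\<xi> - t) - \<alpha> * \<xi> powr (\<alpha> - 1)"
        by (simp add: algebra_simps)
      then show "\<exists>y. (D has_real_derivative y) (at \<xi>) \<and> 0 \<le> y"
        using deriv[OF \<xi>0] by blast
    next
      show "continuous_on {t..s} D" using assms by (intro cont) auto
    qed
    then show ?thesis using Dt by simp
  next
    case False
    then have st: "s \<le> t" by simp
    have "D t \<le> D s"
    proof (rule DERIV_nonpos_imp_decreasing_open[OF st])
      fix \<xi> assume \<xi>: "s < \<xi>" "\<xi> < t"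
      then have \<xi>0: "0 < \<xi>" using assms by simp
      have "t powr (\<alpha> - 1) - \<xi> powr (\<alpha> - 1) \<le> (\<alpha> - 1) * (t - \<xi>)"
        using \<xi> assms by (intro lip) auto
      then have "0 \<le> \<alpha> * ((\<alpha> - 1) * (t - \<xi>) - (t powr (\<alpha> - 1) - \<xi> powr (\<alpha> - 1)))"
        using assms by simp
      then have "\<alpha> * t powr (\<alpha> - 1) + \<alpha> * (\<alpha> - 1) * (\<xi> - t) - \<alpha> * \<xi> powr (\<alpha> - 1) \<le> 0"
        by (simp add: algebra_simps)
      then show "\<exists>y. (D has_real_derivative y) (at \<xi>) \<and> y \<le> 0"
        using deriv[OF \<xi>0] by blast
    next
      show "continuous_on {s..t} D" using assms by (intro cont) auto
    qed
    then show ?thesis using Dt by simp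
  qed
  then show ?thesis unfolding D_def by simp
qed

lemma Cond23:
  fixes \<alpha> \<rho> :: real
  assumes "2 \<le> \<alpha>" "\<alpha> \<le> 3" "0 \<le> \<rho>" "\<rho> \<le> 1"
  shows "\<alpha> * (\<alpha> - 1) / 2 * \<rho> \<le> \<alpha> * (((1 + \<rho>) / 2) powr (\<alpha> - 1) - ((1 - \<rho>) / 2) powr (\<alpha> - 1))"
proof -
  define b where "b = \<alpha> - 1"
  have b: "1 \<le> b" "b \<le> 2" unfolding b_def using assms by auto
  define p where "p = (1 + \<rho>) / 2"
  have p: "1/2 \<le> p" "p \<le> 1" unfolding p_def using assms by auto
  define k where "k x = x powr b - (1 - x) powr b - b * (2 * x - 1) / 2" for x
  have k0: "k (1/2) = 0" unfolding k_def by simp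
  have "k (1/2) \<le> k p"
  proof (rule DERIV_nonneg_imp_increasing_open[OF p(1)])
    fix x assume x: "1/2 < x" "x < p"
    then have x0: "0 < x" "0 < 1 - x" using p by auto
    have d1: "((\<lambda>x. x powr b) has_real_derivative b * x powr (b - 1)) (at x)"
      by (rule has_real_derivative_powr[OF x0(1)])
    have d2: "((\<lambda>x. (1 - x) powr b) has_real_derivative b * (1 - x) powr (b - of_nat 1) * (-1)) (at x)"
      by (rule DERIV_fun_powr) (use x0 in \<open>auto intro!: derivative_eq_intros\<close>)
    have kd: "(k has_real_derivative (b * x powr (b - 1) - b * (1 - x) powr (b - of_nat 1) * (-1) - b * (2 * 1 - 0) / 2)) (at x)"
      unfolding k_def
      by (intro DERIV_diff d1 d2 DERIV_divide DERIV_cmult DERIV_const derivative_eq_intros) (auto)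
    have "x \<le> x powr (b - 1)"
      using powr_mono'[of "b - 1" 1 x] b x0 x p by auto
    moreover have "1 - x \<le> (1 - x) powr (b - 1)"
      using powr_mono'[of "b - 1" 1 "1 - x"] b x0 x p by auto
    ultimately have "b * 1 \<le> b * (x powr (b - 1) + (1 - x) powr (b - 1))"
      using b by (intro mult_left_mono) auto
    then have "0 \<le> b * x powr (b - 1) - b * (1 - x) powr (b - of_nat 1) * (-1) - b * (2 * 1 - 0) / 2"
      by (simp add: algebra_simps)
    then show "\<exists>y. (k has_real_derivative y) (at x) \<and> 0 \<le> y"
      using kd by blast
  next
    have c1: "continuous_on {1/2..p} (\<lambda>x. x powr b)" using b by (intro cont_powr_id) auto
    have c2: "continuous_on {1/2..p} (\<lambda>x. (1 - x) powr b)"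
      by (rule continuous_on_powr'[OF _ continuous_on_const]) (use b p in \<open>auto intro!: continuous_intros\<close>)
    have c3: "continuous_on {1/2..p} (\<lambda>x. b * (2 * x - 1) / 2)" by (intro continuous_intros) auto
    show "continuous_on {1/2..p} k" unfolding k_def by (intro continuous_on_diff c1 c2 c3)
  qed
  then have "0 \<le> k p" using k0 by simp
  moreover have "1 - p = (1 - \<rho>) / 2" "2 * p - 1 = \<rho>" unfolding p_def by (simp_all add: field_simps)
  ultimately have "b * \<rho> / 2 \<le> p powr b - ((1 - \<rho>) / 2) powr b" unfolding k_def by simp
  then have "\<alpha> * (b * \<rho> / 2) \<le> \<alpha> * (p powr b - ((1 - \<rho>) / 2) powr b)"
    using assms by (intro mult_left_mono) auto
  then show ?thesis unfolding p_def b_def by (simp add: mult_ac)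
qed

lemma card_cube: "card (cube n) = 2 ^ n"
  unfolding cube_def by (simp add: card_PiE numeral_2_eq_2)

lemma Phi_eq:
  fixes \<alpha> s :: real
  assumes "1 < \<alpha>" "0 \<le> s"
  shows "Phi \<alpha> s = (s powr \<alpha> - s) / (\<alpha> - 1)"
proof (cases "s = 0")
  case True then show ?thesis by (simp add: Phi_def)
next
  case False
  then have s: "0 < s" using assms by simp
  have "s powr \<alpha> = s powr (1 + (\<alpha> - 1))" by simp
  also have "\<dots> = s powr 1 * s powr (\<alpha> - 1)" by (rule powr_add)
  finally have "s powr \<alpha> = s * s powr (\<alpha> - 1)" using s by simp
  then show ?thesis unfolding Phi_def using assms by (simp add: field_simps)
qed

lemma Phi_bound:
  fixes \<alpha> s t cF :: real
  assumes "1 < \<alpha>" "0 \<le> s" "0 \<le> t"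
    and F: "s powr \<alpha> \<le> t powr \<alpha> + \<alpha> * t powr (\<alpha> - 1) * (s - t) + cF * (s - t)\<^sup>2"
  shows "Phi \<alpha> s \<le> Phi \<alpha> t + ((\<alpha> * t powr (\<alpha> - 1) - 1) / (\<alpha> - 1)) * (s - t) + (cF / (\<alpha> - 1)) * (s - t)\<^sup>2"
proof -
  define S where "S = s powr \<alpha>"
  define Tt where "Tt = t powr \<alpha>"
  define Ut where "Ut = t powr (\<alpha> - 1)"
  have F': "S - s \<le> (Tt - t) + (\<alpha> * Ut - 1) * (s - t) + cF * (s - t)\<^sup>2"
    using F unfolding S_def Tt_def Ut_def by (simp add: algebra_simps)
  have "(S - s) / (\<alpha> - 1) \<le> ((Tt - t) + (\<alpha> * Ut - 1) * (s - t) + cF * (s - t)\<^sup>2) / (\<alpha> - 1)"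
    using F' assms by (intro divide_right_mono) auto
  also have "\<dots> = (Tt - t) / (\<alpha> - 1) + ((\<alpha> * Ut - 1) / (\<alpha> - 1)) * (s - t) + (cF / (\<alpha> - 1)) * (s - t)\<^sup>2"
    by (simp add: add_divide_distrib)
  finally show ?thesis
    using Phi_eq[OF assms(1,2)] Phi_eq[OF assms(1,3)] unfolding S_def Tt_def Ut_def by simp
qed

lemma final:
  fixes n :: nat and \<rho> \<alpha> cF :: real and f :: "(nat \<Rightarrow> real) \<Rightarrow> real"
  assumes a1: "1 < \<alpha>" and r0: "0 \<le> \<rho>" and r1: "\<rho> \<le> 1"
    and fB: "\<forall>x\<in>cube n. f x \<in> {0, 1}"
    and fE: "cube_exp n f = 1 / 2"
    and Fp: "\<And>s. 0 \<le> s \<Longrightarrow> s \<le> 1 \<Longrightarrow> s powr \<alpha> \<le> ((1 + \<rho>) / 2) powr \<alpha> + \<alpha> * ((1 + \<rho>) / 2) powr (\<alpha> - 1) * (s - (1 + \<rho>) / 2) + cF * (s - (1 + \<rho>) / 2)\<^sup>2"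
    and Fq: "\<And>s. 0 \<le> s \<Longrightarrow> s \<le> 1 \<Longrightarrow> s powr \<alpha> \<le> ((1 - \<rho>) / 2) powr \<alpha> + \<alpha> * ((1 - \<rho>) / 2) powr (\<alpha> - 1) * (s - (1 - \<rho>) / 2) + cF * (s - (1 - \<rho>) / 2)\<^sup>2"
    and c0: "0 \<le> cF"
    and cond: "cF * \<rho> \<le> \<alpha> * (((1 + \<rho>) / 2) powr (\<alpha> - 1) - ((1 - \<rho>) / 2) powr (\<alpha> - 1))"
  shows "cube_exp n (\<lambda>x. Phi \<alpha> (noise_op n \<rho> f x))
           \<le> 1/2 * Phi \<alpha> ((1 + \<rho>) / 2) + 1/2 * Phi \<alpha> ((1 - \<rho>) / 2)"
proof -
  define p where "p = (1 + \<rho>) / 2"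
  define q where "q = (1 - \<rho>) / 2"
  have p0: "0 \<le> p" and q0: "0 \<le> q" unfolding p_def q_def using r0 r1 by auto
  define T where "T x = noise_op n \<rho> f x" for x
  define c where "c = cF / (\<alpha> - 1)"
  define dp where "dp = (\<alpha> * p powr (\<alpha> - 1) - 1) / (\<alpha> - 1)"
  define dq where "dq = (\<alpha> * q powr (\<alpha> - 1) - 1) / (\<alpha> - 1)"
  define Pp where "Pp = Phi \<alpha> p"
  define Pq where "Pq = Phi \<alpha> q"
  define N :: real where "N = 2 ^ n"
  have N: "0 < N" unfolding N_def by simp
  have cc: "0 \<le> c" unfolding c_def using c0 a1 by simp
  have cond': "c * \<rho> \<le> dp - dq"
  proof -
    have "cF * \<rho> / (\<alpha> - 1) \<le> \<alpha> * (p powr (\<alpha> - 1) - q powr (\<alpha> - 1)) / (\<alpha> - 1)"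
      using cond a1 unfolding p_def q_def by (intro divide_right_mono) auto
    moreover have "dp - dq = \<alpha> * (p powr (\<alpha> - 1) - q powr (\<alpha> - 1)) / (\<alpha> - 1)"
      unfolding dp_def dq_def using a1 by (simp add: diff_divide_distrib[symmetric] algebra_simps)
    moreover have "c * \<rho> = cF * \<rho> / (\<alpha> - 1)" unfolding c_def by simp
    ultimately show ?thesis by simp
  qed
  have Trange: "0 \<le> T x \<and> T x \<le> 1" if "x \<in> cube n" for x
    unfolding T_def using fB that r0 r1 by (intro noise_range) auto
  define a0 where "a0 = Pq - dq * q + c * q\<^sup>2"
  define b1 where "b1 = dq - 2 * c * q"
  define a2 where "a2 = Pp - dp * p - Pq + dq * q + c * (p\<^sup>2 - q\<^sup>2)"
  define a3 where "a3 = dp - dq - 2 * c * (p - q)"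
  have pw: "Phi \<alpha> (T x) \<le> a0 + b1 * T x + c * (T x)\<^sup>2 + a2 * f x + a3 * (f x * T x)"
    if x: "x \<in> cube n" for x
  proof -
    have Tx: "0 \<le> T x" "T x \<le> 1" using Trange[OF x] by auto
    have bp: "Phi \<alpha> (T x) \<le> Pp + dp * (T x - p) + c * (T x - p)\<^sup>2"
      unfolding Pp_def dp_def c_def
      by (rule Phi_bound[OF a1 Tx(1) p0]) (use Fp[OF Tx] in \<open>simp add: p_def\<close>)
    have bq: "Phi \<alpha> (T x) \<le> Pq + dq * (T x - q) + c * (T x - q)\<^sup>2"
      unfolding Pq_def dq_def c_def
      by (rule Phi_bound[OF a1 Tx(1) q0]) (use Fq[OF Tx] in \<open>simp add: q_def\<close>)
    have "f x = 0 \<or> f x = 1" using fB x by auto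
    then show ?thesis
    proof
      assume "f x = 0"
      moreover have "Pq + dq * (T x - q) + c * (T x - q)\<^sup>2 = a0 + b1 * T x + c * (T x)\<^sup>2"
        unfolding a0_def b1_def by (simp add: algebra_simps power2_eq_square)
      ultimately show ?thesis using bq by simp
    next
      assume "f x = 1"
      moreover have "Pp + dp * (T x - p) + c * (T x - p)\<^sup>2 = a0 + b1 * T x + c * (T x)\<^sup>2 + a2 + a3 * T x"
        unfolding a0_def b1_def a2_def a3_def by (simp add: algebra_simps power2_eq_square)
      ultimately show ?thesis using bp by simp
    qed
  qed
  note M = moments[OF r0 r1 fB fE]
  define Y where "Y = (\<Sum>x\<in>cube n. f x * T x) / N"
  define Z where "Z = (\<Sum>x\<in>cube n. (T x)\<^sup>2) / N"
  have sT: "(\<Sum>x\<in>cube n. T x) = N / 2" using M(2) unfolding T_def N_def by simp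
  have sf: "(\<Sum>x\<in>cube n. f x) = N / 2" using M(1) unfolding N_def by simp
  have Y: "Y \<le> (1 + \<rho>) / 4" using M(3) N unfolding Y_def T_def N_def by (simp add: divide_le_eq mult.commute)
  have Z: "Z \<le> \<rho> * Y + (1 - \<rho>) / 4"
  proof -
    have "(\<Sum>x\<in>cube n. (T x)\<^sup>2) / N \<le> (\<rho> * (\<Sum>x\<in>cube n. f x * T x) + N * ((1 - \<rho>) / 4)) / N"
      using M(4) N unfolding T_def N_def by (intro divide_right_mono) auto
    then show ?thesis unfolding Z_def Y_def using N by (simp add: field_simps)
  qed
  have "(\<Sum>x\<in>cube n. Phi \<alpha> (T x)) \<le> (\<Sum>x\<in>cube n. a0 + b1 * T x + c * (T x)\<^sup>2 + a2 * f x + a3 * (f x * T x))"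
    by (rule sum_mono) (rule pw)
  also have "\<dots> = N * a0 + b1 * (\<Sum>x\<in>cube n. T x) + c * (\<Sum>x\<in>cube n. (T x)\<^sup>2) + a2 * (\<Sum>x\<in>cube n. f x) + a3 * (\<Sum>x\<in>cube n. f x * T x)"
    by (simp add: sum.distrib sum_distrib_left card_cube N_def)
  also have "\<dots> = N * (a0 + b1 / 2 + c * Z + a2 / 2 + a3 * Y)"
    unfolding sT sf Y_def Z_def using N by (simp add: field_simps)
  finally have S: "(\<Sum>x\<in>cube n. Phi \<alpha> (T x)) / N \<le> a0 + b1 / 2 + c * Z + a2 / 2 + a3 * Y"
    using N by (simp add: divide_le_eq mult.commute)
  have "c * Z \<le> c * (\<rho> * Y + (1 - \<rho>) / 4)" using Z cc by (rule mult_left_mono)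
  then have h1: "c * Z \<le> (c * \<rho>) * Y + c * ((1 - \<rho>) / 4)" by (simp add: distrib_left mult.assoc)
  define K where "K = a3 + c * \<rho>"
  have "K * Y \<le> K * ((1 + \<rho>) / 4)"
  proof (rule mult_left_mono[OF Y])
    have "p - q = \<rho>" unfolding p_def q_def by (simp add: field_simps)
    then show "0 \<le> K" unfolding K_def a3_def using cond' by (simp add: mult.commute)
  qed
  then have h2: "a3 * Y + (c * \<rho>) * Y \<le> K * ((1 + \<rho>) / 4)" unfolding K_def by (simp add: distrib_right)
  have h3: "a0 + b1 / 2 + c * ((1 - \<rho>) / 4) + a2 / 2 + K * ((1 + \<rho>) / 4) = 1/2 * Pp + 1/2 * Pq"
    unfolding K_def a0_def b1_def a2_def a3_def p_def q_def by (simp add: field_simps power2_eq_square)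
  have "a0 + b1 / 2 + c * Z + a2 / 2 + a3 * Y \<le> 1/2 * Pp + 1/2 * Pq"
    using h1 h2 h3 by linarith
  with S show ?thesis unfolding cube_exp_def T_def N_def Pp_def Pq_def p_def q_def by simp
qed

theorem corollary2p7:
  fixes n :: nat and \<rho> \<alpha> :: real and f :: "(nat \<Rightarrow> real) \<Rightarrow> real"
  assumes "n \<ge> 1"
    and "(1 < \<alpha> \<and> \<alpha> < 2 \<and> 0 \<le> \<rho> \<and> \<rho> \<le> (1 - theta \<alpha>) / (1 + theta \<alpha>))
         \<or> (2 \<le> \<alpha> \<and> \<alpha> \<le> 3 \<and> 0 \<le> \<rho> \<and> \<rho> \<le> 1)"
    and "\<forall>x\<in>cube n. f x \<in> {0, 1}"
    and "cube_exp n f = 1 / 2"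
  shows "cube_exp n (\<lambda>x. Phi \<alpha> (noise_op n \<rho> f x))
           \<le> 1/2 * Phi \<alpha> ((1 + \<rho>) / 2) + 1/2 * Phi \<alpha> ((1 - \<rho>) / 2)"
  using assms(2)
proof (elim disjE conjE)
  assume a1: "1 < \<alpha>" and a2: "\<alpha> < 2" and r0: "0 \<le> \<rho>" and rt: "\<rho> \<le> (1 - theta \<alpha>) / (1 + theta \<alpha>)"
  note th = theta_props[OF a1 a2]
  define p where "p = (1 + \<rho>) / 2"
  define q where "q = (1 - \<rho>) / 2"
  have "(1 - theta \<alpha>) / (1 + theta \<alpha>) < 1" using th by (simp add: divide_less_eq)
  then have r1: "\<rho> < 1" using rt by simp
  have q0: "0 < q" and qp: "q \<le> p" and p0: "0 < p" unfolding p_def q_def using r0 r1 by auto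
  have "\<rho> * (1 + theta \<alpha>) \<le> 1 - theta \<alpha>" using rt th by (simp add: le_divide_eq)
  then have "theta \<alpha> * (1 + \<rho>) \<le> 1 - \<rho>" by (simp add: algebra_simps)
  then have thq: "theta \<alpha> \<le> q / p" unfolding p_def q_def using r0 by (simp add: field_simps)
  have qp1: "q / p \<le> 1" using qp p0 by simp
  have H: "0 \<le> \<alpha> * (q / p) powr (2 - \<alpha>) - q / p - (\<alpha> - 1)"
    using HH_nonneg[OF a1 a2 thq qp1] unfolding HH_def .
  have C: "(\<alpha> - 1) * q powr (\<alpha> - 2) * (p - q) \<le> \<alpha> * (p powr (\<alpha> - 1) - q powr (\<alpha> - 1))"
    by (rule Cond12[OF a1 a2 q0 qp H])
  have pq: "p - q = \<rho>" unfolding p_def q_def by (simp add: field_simps)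
  show ?thesis
  proof (rule final[OF a1 r0 less_imp_le[OF r1] assms(3,4), where cF = "(\<alpha> - 1) * q powr (\<alpha> - 2)"])
    fix s :: real assume s: "0 \<le> s" "s \<le> 1"
    show "s powr \<alpha> \<le> ((1 + \<rho>) / 2) powr \<alpha> + \<alpha> * ((1 + \<rho>) / 2) powr (\<alpha> - 1) * (s - (1 + \<rho>) / 2) + (\<alpha> - 1) * q powr (\<alpha> - 2) * (s - (1 + \<rho>) / 2)\<^sup>2"
      using F12[OF a1 a2 s(1) q0 qp] unfolding p_def .
    show "s powr \<alpha> \<le> ((1 - \<rho>) / 2) powr \<alpha> + \<alpha> * ((1 - \<rho>) / 2) powr (\<alpha> - 1) * (s - (1 - \<rho>) / 2) + (\<alpha> - 1) * q powr (\<alpha> - 2) * (s - (1 - \<rho>) / 2)\<^sup>2"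
      using F12[OF a1 a2 s(1) q0 order_refl] unfolding q_def .
  next
    show "0 \<le> (\<alpha> - 1) * q powr (\<alpha> - 2)" using a1 by simp
  next
    show "(\<alpha> - 1) * q powr (\<alpha> - 2) * \<rho> \<le> \<alpha> * (((1 + \<rho>) / 2) powr (\<alpha> - 1) - ((1 - \<rho>) / 2) powr (\<alpha> - 1))"
    proof -
      have "(\<alpha> - 1) * q powr (\<alpha> - 2) * \<rho> \<le> \<alpha> * (p powr (\<alpha> - 1) - q powr (\<alpha> - 1))"
        using C by (simp only: pq)
      then show ?thesis unfolding p_def q_def .
    qed
  qed
next
  assume a2: "2 \<le> \<alpha>" and a3: "\<alpha> \<le> 3" and r0: "0 \<le> \<rho>" and r1: "\<rho> \<le> 1"
  have a1: "1 < \<alpha>" using a2 by simp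
  have p: "0 \<le> (1 + \<rho>) / 2" "(1 + \<rho>) / 2 \<le> 1" and q: "0 \<le> (1 - \<rho>) / 2" "(1 - \<rho>) / 2 \<le> 1"
    using r0 r1 by auto
  show ?thesis
  proof (rule final[OF a1 r0 r1 assms(3,4), where cF = "\<alpha> * (\<alpha> - 1) / 2"])
    fix s :: real assume s: "0 \<le> s" "s \<le> 1"
    show "s powr \<alpha> \<le> ((1 + \<rho>) / 2) powr \<alpha> + \<alpha> * ((1 + \<rho>) / 2) powr (\<alpha> - 1) * (s - (1 + \<rho>) / 2) + \<alpha> * (\<alpha> - 1) / 2 * (s - (1 + \<rho>) / 2)\<^sup>2"
      by (rule F23[OF a2 a3 p s])
    show "s powr \<alpha> \<le> ((1 - \<rho>) / 2) powr \<alpha> + \<alpha> * ((1 - \<rho>) / 2) powr (\<alpha> - 1) * (s - (1 - \<rho>) / 2) + \<alpha> * (\<alpha> - 1) / 2 * (s - (1 - \<rho>) / 2)\<^sup>2"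
      by (rule F23[OF a2 a3 q s])
  next
    show "0 \<le> \<alpha> * (\<alpha> - 1) / 2" using a1 by simp
  next
    show "\<alpha> * (\<alpha> - 1) / 2 * \<rho> \<le> \<alpha> * (((1 + \<rho>) / 2) powr (\<alpha> - 1) - ((1 - \<rho>) / 2) powr (\<alpha> - 1))"
      by (rule Cond23[OF a2 a3 r0 r1])
  qed
qed

end
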